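(* Let $\mu$ be a strict partition with $\mu_2>0$ and $\mu_1-\mu_2=1$. Then the generating function $\sum_{n\ge0}|\mathrm{Av}_n(\mu)|z^n$ is not algebraic over $\mathbb Q(z)$.
   Context: A partition is a weakly decreasing sequence of nonnegative integers with finitely many nonzero parts, identified with its Ferrers board. $\alpha$ contains $\mu$ if one can delete some rows and some columns of the Ferrers board of $\alpha$ so that after top/left-justifying one obtains $\mu$; otherwise $\alpha$ avoids $\mu$. $\mathrm{Av}_n(\mu)$ is the set of partitions of weight $n$ avoiding $\mu$. Strict: positive parts distinct. *)

theory Defs
  imports "HOL-Computational_Algebra.Computational_Algebra"
begin

definition is_partition :: "nat list \<Rightarrow> bool" where
  "is_partition lam \<longleftrightarrow> sorted_wrt (\<ge>) lam \<and> (\<forall>x\<in>set lam. 0 < x)"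

definition is_strict_partition :: "nat list \<Rightarrow> bool" where
  "is_strict_partition lam \<longleftrightarrow> sorted_wrt (>) lam \<and> (\<forall>x\<in>set lam. 0 < x)"

text \<open>Ferrers board: cell (i,j) (row i, column j, 0-indexed) iff j < i-th part.\<close>
definition ferrers :: "nat list \<Rightarrow> (nat \<times> nat) set" where
  "ferrers lam = {(i, j). i < length lam \<and> j < lam ! i}"

text \<open>alpha contains mu: keep the rows in range f and columns in range g
  (f, g strictly increasing enumerations of the kept rows/columns) and delete
  all others; after top/left-justification the kept cells form the board of mu.\<close>
definition contains :: "nat list \<Rightarrow> nat list \<Rightarrow> bool" where
  "contains \<alpha> \<mu> \<longleftrightarrow> (\<exists>f g :: nat \<Rightarrow> nat. strict_mono f \<and> strict_mono g \<and>
      (\<forall>i j. (i, j) \<in> ferrers \<mu> \<longleftrightarrow> (f i, g j) \<in> ferrers \<alpha>))"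

definition Av :: "nat \<Rightarrow> nat list \<Rightarrow> nat list set" where
  "Av n \<mu> = {\<alpha>. is_partition \<alpha> \<and> sum_list \<alpha> = n \<and> \<not> contains \<alpha> \<mu>}"

definition Av_gf :: "nat list \<Rightarrow> rat fps" where
  "Av_gf \<mu> = Abs_fps (\<lambda>n. of_nat (card (Av n \<mu>)))"

text \<open>A formal power series F over Q is algebraic over Q(z) iff it is a root of a
  nonzero polynomial with coefficients in Q(z); after clearing denominators
  the coefficients may be taken in Q[z].\<close>
definition algebraic_over_rat_z :: "rat fps \<Rightarrow> bool" where
  "algebraic_over_rat_z F \<longleftrightarrow>
     (\<exists>P :: rat poly poly. P \<noteq> 0 \<and> poly (map_poly fps_of_poly P) F = 0)"

end

theory Submission
  imports Defs "HOL-Analysis.Analysis" "HOL-Real_Asymp.Real_Asymp"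
begin


definition cont :: "nat list \<Rightarrow> nat set \<Rightarrow> bool" where
  "cont \<mu> S \<longleftrightarrow> (\<exists>g. strict_mono g \<and> (\<forall>i<length \<mu>. \<exists>v\<in>S. g (\<mu>!i - 1) < v \<and> v \<le> g (\<mu>!i)))"

lemma contains_imp_cont:
  assumes "is_strict_partition \<mu>" "contains \<alpha> \<mu>"
  shows "cont \<mu> (set \<alpha>)"
proof -
  obtain f g where f: "strict_mono f" and g: "strict_mono g"
    and fg: "\<And>i j. (i, j) \<in> ferrers \<mu> \<longleftrightarrow> (f i, g j) \<in> ferrers \<alpha>"
    using assms(2) unfolding contains_def by blast
  have "\<exists>v\<in>set \<alpha>. g (\<mu>!i - 1) < v \<and> v \<le> g (\<mu>!i)" if i: "i < length \<mu>" for i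
  proof -
    have pos: "\<mu>!i > 0" using assms(1) i unfolding is_strict_partition_def by auto
    have "(i, \<mu>!i - 1) \<in> ferrers \<mu>" using i pos by (auto simp: ferrers_def)
    hence 1: "f i < length \<alpha> \<and> g (\<mu>!i - 1) < \<alpha>!(f i)" using fg by (auto simp: ferrers_def)
    have "(i, \<mu>!i) \<notin> ferrers \<mu>" by (auto simp: ferrers_def)
    hence "\<not> g (\<mu>!i) < \<alpha>!(f i)" using fg 1 by (auto simp: ferrers_def)
    thus ?thesis using 1 by (intro bexI[of _ "\<alpha>!(f i)"]) auto
  qed
  thus ?thesis using g unfolding cont_def by blast
qed

lemma cont_imp_contains:
  assumes mu: "is_strict_partition \<mu>" and al: "is_partition \<alpha>" and c: "cont \<mu> (set \<alpha>)"
  shows "contains \<alpha> \<mu>"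
proof -
  obtain g where g: "strict_mono g" and gv: "\<forall>i<length \<mu>. \<exists>v\<in>set \<alpha>. g (\<mu>!i - 1) < v \<and> v \<le> g (\<mu>!i)"
    using c unfolding cont_def by blast
  then obtain v where v: "\<And>i. i < length \<mu> \<Longrightarrow> v i \<in> set \<alpha> \<and> g (\<mu>!i - 1) < v i \<and> v i \<le> g (\<mu>!i)"
    by metis
  have smu: "sorted_wrt (>) \<mu>" and mupos: "\<forall>x\<in>set \<mu>. 0 < x" using mu by (auto simp: is_strict_partition_def)
  have sal: "sorted_wrt (\<ge>) \<alpha>" using al by (auto simp: is_partition_def)
  have vdec: "v j < v i" if "i < j" "j < length \<mu>" for i j
  proof -
    have "\<mu>!j < \<mu>!i" using smu that by (simp add: sorted_wrt_iff_nth_less)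
    hence "\<mu>!j \<le> \<mu>!i - 1" by simp
    hence "g (\<mu>!j) \<le> g (\<mu>!i - 1)" using g strict_mono_less_eq by blast
    thus ?thesis using v[of i] v[of j] that by force
  qed
  define idx where "idx i = (SOME p. p < length \<alpha> \<and> \<alpha>!p = v i)" for i
  have idx: "idx i < length \<alpha> \<and> \<alpha>!(idx i) = v i" if "i < length \<mu>" for i
    unfolding idx_def by (rule someI_ex) (use v[OF that] in \<open>auto simp: in_set_conv_nth\<close>)
  define f where "f i = (if i < length \<mu> then idx i else length \<alpha> + i)" for i
  have "f i < f (Suc i)" for i
  proof (cases "Suc i < length \<mu>")
    case True
    have "v (Suc i) < v i" using vdec True by simp
    have "\<not> idx i \<ge> idx (Suc i)"
    proof
      assume le: "idx (Suc i) \<le> idx i"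
      have "\<alpha>!(idx i) \<le> \<alpha>!(idx (Suc i))"
      proof (cases "idx (Suc i) = idx i")
        case False
        hence "idx (Suc i) < idx i" using le by simp
        moreover have "idx i < length \<alpha>" using idx[of i] True by simp
        ultimately show ?thesis using sal unfolding sorted_wrt_iff_nth_less by blast
      qed simp
      thus False using idx[of i] idx[of "Suc i"] True \<open>v (Suc i) < v i\<close> by simp
    qed
    thus ?thesis using True by (simp add: f_def)
  next
    case False
    thus ?thesis using idx[of i] by (auto simp: f_def)
  qed
  hence f: "strict_mono f" by (simp add: strict_mono_Suc_iff)
  have "(i, j) \<in> ferrers \<mu> \<longleftrightarrow> (f i, g j) \<in> ferrers \<alpha>" for i j
  proof (cases "i < length \<mu>")
    case True
    have fi: "f i < length \<alpha>" "\<alpha>!(f i) = v i" using idx[OF True] True by (auto simp: f_def)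
    have "j < \<mu>!i \<longleftrightarrow> g j < v i"
    proof
      assume "j < \<mu>!i" hence "j \<le> \<mu>!i - 1" by simp
      hence "g j \<le> g (\<mu>!i - 1)" using g strict_mono_less_eq by blast
      thus "g j < v i" using v[OF True] by simp
    next
      assume a: "g j < v i"
      show "j < \<mu>!i"
      proof (rule ccontr)
        assume "\<not> j < \<mu>!i"
        hence "g (\<mu>!i) \<le> g j" using g strict_mono_less_eq by (metis not_le)
        thus False using a v[OF True] by simp
      qed
    qed
    thus ?thesis using True fi by (auto simp: ferrers_def)
  next
    case False
    thus ?thesis by (auto simp: ferrers_def f_def)
  qed
  thus ?thesis using f g unfolding contains_def by blast
qed

lemma contains_iff_cont:
  assumes "is_strict_partition \<mu>" "is_partition \<alpha>"
  shows "contains \<alpha> \<mu> \<longleftrightarrow> cont \<mu> (set \<alpha>)"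
  using assms contains_imp_cont cont_imp_contains by blast


lemma strict_nth_le0:
  assumes "is_strict_partition \<mu>" "i < length \<mu>"
  shows "\<mu>!i \<le> \<mu>!0" "0 < \<mu>!i"
proof -
  have s: "sorted_wrt (>) \<mu>" and p: "\<forall>x\<in>set \<mu>. 0 < x" using assms(1) by (auto simp: is_strict_partition_def)
  show "\<mu>!i \<le> \<mu>!0" using s assms(2) by (cases i) (auto simp: sorted_wrt_iff_nth_less intro: less_imp_le)
  show "0 < \<mu>!i" using p assms(2) by auto
qed

lemma card_cont:
  assumes mu: "is_strict_partition \<mu>" and fin: "finite S" and z: "0 \<notin> S" and c: "card S \<ge> \<mu>!0"
    and ne: "\<mu> \<noteq> []"
  shows "cont \<mu> S"
proof -
  define xs where "xs = sorted_list_of_set S"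
  define n where "n = card S"
  have n1: "n \<ge> 1" using strict_nth_le0(2)[OF mu, of 0] ne c by (simp add: n_def)
  have lxs: "length xs = n" by (simp add: xs_def n_def)
  have sxs: "sorted_wrt (<) xs" by (simp add: xs_def)
  have setxs: "set xs = S" using fin by (simp add: xs_def)
  define g where "g j = (if j = 0 then 0 else if j \<le> n then xs!(j-1) else xs!(n-1) + j)" for j
  have gS: "g j \<in> S" if "1 \<le> j" "j \<le> n" for j
    using that lxs setxs by (auto simp: g_def)
  have "g j < g (Suc j)" for j
  proof -
    consider "j = 0" | "1 \<le> j" "Suc j \<le> n" | "j \<ge> n" "j \<ge> 1" by linarith
    thus ?thesis
    proof cases
      case 1
      have "xs!0 \<in> S" using lxs setxs n1 nth_mem[of 0 xs] by auto
      hence "xs!0 \<noteq> 0" using z by metis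
      thus ?thesis using 1 n1 by (simp add: g_def)
    next
      case 2
      have "xs!(j-1) < xs!j" using sxs 2 lxs by (simp add: sorted_wrt_iff_nth_less)
      thus ?thesis using 2 by (simp add: g_def)
    next
      case 3
      thus ?thesis by (auto simp: g_def)
    qed
  qed
  hence g: "strict_mono g" by (simp add: strict_mono_Suc_iff)
  have "\<exists>v\<in>S. g (\<mu>!i - 1) < v \<and> v \<le> g (\<mu>!i)" if i: "i < length \<mu>" for i
  proof -
    have a: "1 \<le> \<mu>!i" "\<mu>!i \<le> n" using strict_nth_le0[OF mu i] c by (auto simp: n_def)
    have "g (\<mu>!i - 1) < g (\<mu>!i)" using g a by (simp add: strict_mono_def)
    thus ?thesis using gS[OF a] by blast
  qed
  thus ?thesis using g unfolding cont_def by blast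
qed

lemma cont_swap_max:
  assumes mu: "is_strict_partition \<mu>" and l2: "length \<mu> \<ge> 2" and m01: "\<mu>!0 = \<mu>!1 + 1"
    and Wa: "\<forall>w\<in>W. w < a" and Wb: "\<forall>w\<in>W. w < b"
    and c: "cont \<mu> (insert a W)"
  shows "cont \<mu> (insert b W)"
proof -
  obtain g where g: "strict_mono g" and gv: "\<forall>i<length \<mu>. \<exists>v\<in>insert a W. g (\<mu>!i - 1) < v \<and> v \<le> g (\<mu>!i)"
    using c unfolding cont_def by blast
  define m where "m = \<mu>!1"
  have m1: "m \<ge> 1" using strict_nth_le0(2)[OF mu, of 1] l2 by (simp add: m_def)
  obtain v0 where v0: "v0 \<in> insert a W" "g m < v0" "v0 \<le> g (m+1)"
  proof -
    have "0 < length \<mu>" using l2 by linarith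
    from gv[rule_format, OF this] m01 show ?thesis using that by (auto simp: m_def)
  qed
  have le_a: "v0 \<le> a" using v0(1) Wa by auto
  have inW: "v \<in> W" if "v \<in> insert a W" "v < v0" for v
    using that le_a by auto
  obtain v1 where v1: "v1 \<in> insert a W" "g (m - 1) < v1" "v1 \<le> g m"
    using gv[rule_format, of 1] l2 by (auto simp: m_def)
  have v1W: "v1 \<in> W" using inW v1 v0 by force
  have v1b: "v1 < b" using v1W Wb by auto
  define g' where "g' j = (if j < m then g j else if j = m then v1 else b + j)" for j
  have "g' j < g' (Suc j)" for j
  proof -
    consider "Suc j < m" | "Suc j = m" | "j = m" | "j > m" by linarith
    thus ?thesis
    proof cases
      case 1 thus ?thesis using g by (simp add: g'_def strict_mono_def)
    next
      case 2
      hence "j = m - 1" by simp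
      thus ?thesis using v1 2 by (simp add: g'_def)
    next
      case 3 thus ?thesis using v1b by (simp add: g'_def)
    next
      case 4 thus ?thesis by (simp add: g'_def)
    qed
  qed
  hence g': "strict_mono g'" by (simp add: strict_mono_Suc_iff)
  have "\<exists>v\<in>insert b W. g' (\<mu>!i - 1) < v \<and> v \<le> g' (\<mu>!i)" if i: "i < length \<mu>" for i
  proof -
    consider "i = 0" | "i = 1" | "i \<ge> 2" by linarith
    thus ?thesis
    proof cases
      case 1
      thus ?thesis using m01 v1b by (intro bexI[of _ b]) (auto simp: g'_def m_def)
    next
      case 2
      thus ?thesis using v1W v1 m1 by (intro bexI[of _ v1]) (auto simp: g'_def m_def)
    next
      case 3
      have "\<mu>!i < \<mu>!1" using mu i 3 by (auto simp: is_strict_partition_def sorted_wrt_iff_nth_less)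
      hence lt: "\<mu>!i < m" by (simp add: m_def)
      obtain v where v: "v \<in> insert a W" "g (\<mu>!i - 1) < v" "v \<le> g (\<mu>!i)" using gv i by blast
      have "g (\<mu>!i) \<le> g m" using g lt by (simp add: strict_mono_less_eq)
      hence "v < v0" using v v0 by simp
      hence "v \<in> W" using inW v by blast
      moreover have "g' (\<mu>!i - 1) = g (\<mu>!i - 1)" "g' (\<mu>!i) = g (\<mu>!i)" using lt by (auto simp: g'_def)
      ultimately show ?thesis using v by auto
    qed
  qed
  thus ?thesis using g' unfolding cont_def by blast
qed

lemma not_cont_single:
  assumes l2: "length \<mu> \<ge> 2" and m01: "\<mu>!0 = \<mu>!1 + 1"
  shows "\<not> cont \<mu> {a}"
proof
  assume "cont \<mu> {a}"
  then obtain g where g: "strict_mono g" and gv: "\<forall>i<length \<mu>. \<exists>v\<in>{a}. g (\<mu>!i - 1) < v \<and> v \<le> g (\<mu>!i)"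
    unfolding cont_def by blast
  have ne: "\<mu> \<noteq> []" using l2 by auto
  have "g (\<mu>!1) < a" using gv[rule_format, of 0] ne l2 m01 by auto
  moreover have "a \<le> g (\<mu>!1)" using gv[rule_format, of 1] l2 by auto
  ultimately show False by simp
qed


lemma set_Cons_image: "set_Cons A XS = (\<lambda>(x, xs). x # xs) ` (A \<times> XS)"
  by (auto simp: set_Cons_def)

lemma finite_listset: "(\<forall>B\<in>set Bs. finite B) \<Longrightarrow> finite (listset Bs)"
  by (induction Bs) (auto simp: set_Cons_image)

lemma sum_listset:
  fixes \<phi> :: "'a \<Rightarrow> 'b::comm_semiring_1"
  assumes "\<forall>B\<in>set Bs. finite B"
  shows "(\<Sum>ps\<in>listset Bs. prod_list (map \<phi> ps)) = prod_list (map (sum \<phi>) Bs)"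
  using assms
proof (induction Bs)
  case Nil thus ?case by simp
next
  case (Cons B Bs)
  have inj: "inj_on (\<lambda>(x, xs). x # xs) (B \<times> listset Bs)" by (auto simp: inj_on_def)
  have "(\<Sum>ps\<in>listset (B # Bs). prod_list (map \<phi> ps))
      = (\<Sum>(x, xs)\<in>B \<times> listset Bs. \<phi> x * prod_list (map \<phi> xs))"
    unfolding listset.simps set_Cons_image sum.reindex[OF inj] by (simp add: split_def comp_def)
  also have "\<dots> = (\<Sum>x\<in>B. \<Sum>xs\<in>listset Bs. \<phi> x * prod_list (map \<phi> xs))"
    by (simp only: sum.cartesian_product)
  also have "\<dots> = sum \<phi> B * (\<Sum>xs\<in>listset Bs. prod_list (map \<phi> xs))"
    by (simp only: sum_product)
  finally show ?case using Cons by simp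
qed

lemma listset_replicate: "listset (replicate s B) = {ps. length ps = s \<and> set ps \<subseteq> B}"
proof (induction s)
  case 0 thus ?case by auto
next
  case (Suc s)
  show ?case
  proof (intro set_eqI iffI)
    fix ps assume "ps \<in> listset (replicate (Suc s) B)"
    thus "ps \<in> {ps. length ps = Suc s \<and> set ps \<subseteq> B}" using Suc by (auto simp: set_Cons_def)
  next
    fix ps assume "ps \<in> {ps. length ps = Suc s \<and> set ps \<subseteq> B}"
    thus "ps \<in> listset (replicate (Suc s) B)" using Suc by (cases ps) (auto simp: set_Cons_def)
  qed
qed

definition part :: "(nat \<times> nat) list \<Rightarrow> nat list" where
  "part ps = concat (map (\<lambda>(v, r). replicate r v) ps)"

lemma part_Nil [simp]: "part [] = []" by (simp add: part_def)
lemma part_Cons [simp]: "part ((v, r) # ps) = replicate r v @ part ps" by (simp add: part_def)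

lemma power_part:
  fixes x :: real
  shows "x ^ sum_list (part ps) = prod_list (map (\<lambda>(v, r). x ^ (v * r)) ps)"
proof (induction ps)
  case (Cons p ps)
  obtain v r where p: "p = (v, r)" by (cases p)
  have "x ^ sum_list (part (p # ps)) = x ^ (v * r) * x ^ sum_list (part ps)"
    by (simp add: p power_add sum_list_replicate mult.commute)
  thus ?case using Cons by (simp add: p)
qed simp

lemma set_part: "\<forall>p\<in>set ps. 1 \<le> snd p \<Longrightarrow> set (part ps) = fst ` set ps"
  by (induction ps) (fastforce simp: image_iff)+

lemma part_exists:
  assumes "is_partition \<alpha>"
  shows "\<exists>ps. part ps = \<alpha> \<and> length ps = card (set \<alpha>) \<and>
     (\<forall>p\<in>set ps. 1 \<le> fst p \<and> 1 \<le> snd p \<and> fst p * snd p \<le> sum_list \<alpha>) \<and>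
     (\<alpha> \<noteq> [] \<longrightarrow> ps \<noteq> [] \<and> fst (hd ps) = hd \<alpha>)"
  using assms
proof (induction \<alpha>)
  case Nil thus ?case by auto
next
  case (Cons v \<alpha>')
  have sal: "sorted_wrt (\<ge>) (v # \<alpha>')" and pos: "\<forall>x\<in>set (v # \<alpha>'). 0 < x"
    using Cons.prems by (auto simp: is_partition_def)
  have "is_partition \<alpha>'" using Cons.prems by (auto simp: is_partition_def)
  then obtain ps' where ps': "part ps' = \<alpha>'" "length ps' = card (set \<alpha>')"
     "\<forall>p\<in>set ps'. 1 \<le> fst p \<and> 1 \<le> snd p \<and> fst p * snd p \<le> sum_list \<alpha>'"
     "\<alpha>' \<noteq> [] \<longrightarrow> ps' \<noteq> [] \<and> fst (hd ps') = hd \<alpha>'"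
    using Cons.IH by blast
  show ?case
  proof (cases "\<alpha>' \<noteq> [] \<and> hd \<alpha>' = v")
    case True
    then obtain r rest where eq: "ps' = (v, r) # rest" using ps'(4)
      by (cases ps') auto
    have vin: "v \<in> set \<alpha>'" using True by (cases \<alpha>') auto
    define ps where "ps = (v, Suc r) # rest"
    have "part ps = v # \<alpha>'" using ps'(1) eq by (simp add: ps_def)
    moreover have "length ps = card (set (v # \<alpha>'))" using ps'(2) eq vin
      by (simp add: ps_def insert_absorb)
    moreover have "\<forall>p\<in>set ps. 1 \<le> fst p \<and> 1 \<le> snd p \<and> fst p * snd p \<le> sum_list (v # \<alpha>')"
      using ps'(3) eq pos by (auto simp: ps_def)
    moreover have "ps \<noteq> [] \<and> fst (hd ps) = hd (v # \<alpha>')" by (simp add: ps_def)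
    ultimately show ?thesis by blast
  next
    case False
    have vnot: "v \<notin> set \<alpha>'"
    proof
      assume vin: "v \<in> set \<alpha>'"
      then obtain y ys where a': "\<alpha>' = y # ys" by (cases \<alpha>') auto
      have "v \<ge> y" "y \<ge> v" using sal vin a' by auto
      thus False using False a' by simp
    qed
    define ps where "ps = (v, 1) # ps'"
    have "part ps = v # \<alpha>'" using ps'(1) by (simp add: ps_def)
    moreover have "length ps = card (set (v # \<alpha>'))" using ps'(2) vnot
      by (simp add: ps_def)
    moreover have "\<forall>p\<in>set ps. 1 \<le> fst p \<and> 1 \<le> snd p \<and> fst p * snd p \<le> sum_list (v # \<alpha>')"
      using ps'(3) pos by (auto simp: ps_def)
    moreover have "ps \<noteq> [] \<and> fst (hd ps) = hd (v # \<alpha>')" by (simp add: ps_def)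
    ultimately show ?thesis by blast
  qed
qed

definition good :: "(nat \<times> nat) list \<Rightarrow> bool" where
  "good ps \<longleftrightarrow> sorted_wrt (\<lambda>p q. fst q < fst p) ps \<and> (\<forall>p\<in>set ps. 1 \<le> snd p)"

lemma part_inj_aux:
  "good ps \<Longrightarrow> good qs \<Longrightarrow> part ps = part qs \<Longrightarrow> ps = qs"
proof (induction ps arbitrary: qs)
  case Nil
  thus ?case by (cases qs) (auto simp: good_def)
next
  case (Cons p ps)
  obtain v r where p: "p = (v, r)" by (cases p)
  obtain q qs' where q: "qs = q # qs'" using Cons.prems by (cases qs) (auto simp: good_def p)
  obtain u s where qq: "q = (u, s)" by (cases q)
  have r1: "1 \<le> r" and s1: "1 \<le> s" using Cons.prems by (auto simp: good_def p q qq)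
  have gps: "good ps" "good qs'" using Cons.prems by (auto simp: good_def q)
  have ltv: "\<forall>y\<in>set (part ps). y < v" using Cons.prems(1) set_part[of ps] gps
    by (auto simp: good_def p)
  have ltu: "\<forall>y\<in>set (part qs'). y < u" using Cons.prems(2) set_part[of qs'] gps
    by (auto simp: good_def q qq)
  have eq: "replicate r v @ part ps = replicate s u @ part qs'" using Cons.prems(3) by (simp add: p q qq)
  have "u = v" using eq r1 s1 by (cases r; cases s) auto
  have "r = s"
  proof (rule ccontr)
    assume "r \<noteq> s"
    then consider "r < s" | "s < r" by linarith
    thus False
    proof cases
      case 1
      have "replicate s u = replicate r v @ replicate (s - r) v" using 1 \<open>u = v\<close>
        by (simp add: replicate_add[symmetric])
      hence "part ps = replicate (s - r) v @ part qs'" using eq by simp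
      hence "v \<in> set (part ps)" using 1 by (cases "s - r") auto
      thus False using ltv by auto
    next
      case 2
      have "replicate r v = replicate s u @ replicate (r - s) u" using 2 \<open>u = v\<close>
        by (simp add: replicate_add[symmetric])
      hence "part qs' = replicate (r - s) u @ part ps" using eq by simp
      hence "u \<in> set (part qs')" using 2 by (cases "r - s") auto
      thus False using ltu by auto
    qed
  qed
  hence "part ps = part qs'" using eq \<open>u = v\<close> by simp
  thus ?case using Cons.IH gps p q qq \<open>u = v\<close> \<open>r = s\<close> by simp
qed

lemma inj_on_part: "inj_on part {ps. good ps}"
  using part_inj_aux by (auto simp: inj_on_def)

lemma sorted_wrt_ge_replicate: "sorted_wrt (\<ge>) (replicate r (v::nat))"
  by (induction r) auto

lemma part_is_partition:
  assumes "good ps" "\<forall>p\<in>set ps. 1 \<le> fst p"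
  shows "is_partition (part ps)"
  using assms
proof (induction ps)
  case Nil thus ?case by (simp add: is_partition_def)
next
  case (Cons p ps)
  obtain v r where p: "p = (v, r)" by (cases p)
  have g: "good ps" using Cons.prems by (auto simp: good_def)
  have ip: "is_partition (part ps)" using Cons g by auto
  have lt: "\<forall>y\<in>set (part ps). y < v" using Cons.prems set_part[of ps] g by (auto simp: good_def p)
  have v1: "1 \<le> v" using Cons.prems p by auto
  show ?case using ip lt v1
    by (auto simp: is_partition_def p sorted_wrt_append sorted_wrt_ge_replicate intro: less_imp_le)
qed


definition Sav :: "nat list \<Rightarrow> nat \<Rightarrow> nat list set" where
  "Sav \<mu> N = {\<alpha>. is_partition \<alpha> \<and> sum_list \<alpha> \<le> N \<and> \<not> contains \<alpha> \<mu>}"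

definition Amax :: "nat list \<Rightarrow> nat" where
  "Amax \<mu> = Max {card (set \<alpha>) |\<alpha>. is_partition \<alpha> \<and> \<not> contains \<alpha> \<mu>}"

lemma length_le_sum_list: "\<forall>x\<in>set xs. 0 < (x::nat) \<Longrightarrow> length xs \<le> sum_list xs"
  by (induction xs) auto

lemma finite_partitions_le: "finite {\<alpha>. is_partition \<alpha> \<and> sum_list \<alpha> \<le> N}"
proof (rule finite_subset)
  show "{\<alpha>. is_partition \<alpha> \<and> sum_list \<alpha> \<le> N} \<subseteq> {xs. set xs \<subseteq> {..N} \<and> length xs \<le> N}"
    using length_le_sum_list member_le_sum_list by (fastforce simp: is_partition_def)
  show "finite {xs. set xs \<subseteq> {..N} \<and> length xs \<le> N}" by (rule finite_lists_length_le) simp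
qed

lemma finite_Sav: "finite (Sav \<mu> N)"
  by (rule finite_subset[OF _ finite_partitions_le[of N]]) (auto simp: Sav_def)

lemma finite_Av: "finite (Av n \<mu>)"
  by (rule finite_subset[OF _ finite_partitions_le[of n]]) (auto simp: Av_def)

lemma partial_sum_Sav:
  fixes x :: real
  shows "(\<Sum>n\<le>N. real (card (Av n \<mu>)) * x ^ n) = (\<Sum>\<alpha>\<in>Sav \<mu> N. x ^ sum_list \<alpha>)"
proof -
  have eq: "Sav \<mu> N = (\<Union>n\<in>{..N}. Av n \<mu>)" by (auto simp: Sav_def Av_def)
  have "(\<Sum>\<alpha>\<in>Sav \<mu> N. x ^ sum_list \<alpha>) = (\<Sum>n\<le>N. \<Sum>\<alpha>\<in>Av n \<mu>. x ^ sum_list \<alpha>)"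
    unfolding eq apply (rule sum.UNION_disjoint) apply simp apply (simp add: finite_Av) apply (auto simp: Av_def) done
  also have "\<dots> = (\<Sum>n\<le>N. real (card (Av n \<mu>)) * x ^ n)"
    by (intro sum.cong refl) (simp add: Av_def)
  finally show ?thesis by simp
qed

context
  fixes \<mu> :: "nat list"
  assumes mu: "is_strict_partition \<mu>" and l2: "length \<mu> \<ge> 2" and m01: "\<mu>!0 = \<mu>!1 + 1"
begin

lemma avoid_card: "is_partition \<alpha> \<Longrightarrow> \<not> contains \<alpha> \<mu> \<Longrightarrow> card (set \<alpha>) < \<mu>!0"
proof (rule ccontr)
  assume p: "is_partition \<alpha>" and nc: "\<not> contains \<alpha> \<mu>" and "\<not> card (set \<alpha>) < \<mu>!0"
  hence "cont \<mu> (set \<alpha>)" using l2 p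
    by (intro card_cont[OF mu]) (auto simp: is_partition_def)
  thus False using cont_imp_contains[OF mu p] nc by simp
qed

lemma Amax_props:
  shows "\<And>\<alpha>. is_partition \<alpha> \<Longrightarrow> \<not> contains \<alpha> \<mu> \<Longrightarrow> card (set \<alpha>) \<le> Amax \<mu>"
    and "\<exists>\<alpha>0. is_partition \<alpha>0 \<and> \<not> contains \<alpha>0 \<mu> \<and> card (set \<alpha>0) = Amax \<mu>"
    and "Amax \<mu> \<ge> 1"
proof -
  define C where "C = {card (set \<alpha>) |\<alpha>. is_partition \<alpha> \<and> \<not> contains \<alpha> \<mu>}"
  have fin: "finite C" by (rule finite_subset[of _ "{..\<mu>!0}"]) (auto simp: C_def dest: avoid_card)
  have one: "is_partition [1]" by (simp add: is_partition_def)
  have nc1: "\<not> contains [1] \<mu>"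
    using contains_imp_cont[OF mu] not_cont_single[OF l2 m01, of 1] by force
  hence "1 \<in> C" using one unfolding C_def by force
  hence ne: "C \<noteq> {}" by auto
  show "\<And>\<alpha>. is_partition \<alpha> \<Longrightarrow> \<not> contains \<alpha> \<mu> \<Longrightarrow> card (set \<alpha>) \<le> Amax \<mu>"
    using fin unfolding Amax_def C_def[symmetric] by (auto simp: C_def intro!: Max_ge)
  show "\<exists>\<alpha>0. is_partition \<alpha>0 \<and> \<not> contains \<alpha>0 \<mu> \<and> card (set \<alpha>0) = Amax \<mu>"
    using Max_in[OF fin ne] unfolding Amax_def C_def[symmetric] by (auto simp: C_def)
  show "Amax \<mu> \<ge> 1" using fin \<open>1 \<in> C\<close> unfolding Amax_def C_def[symmetric] by (simp add: Max_ge_iff)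
qed

lemma upper_sum:
  fixes x :: real
  assumes x: "0 \<le> x"
  shows "(\<Sum>\<alpha>\<in>Sav \<mu> N. x ^ sum_list \<alpha>) \<le> (\<Sum>s\<le>Amax \<mu>. (\<Sum>(v, r)\<in>{1..N}\<times>{1..N}. x ^ (v * r)) ^ s)"
proof -
  define B where "B = {1..N}\<times>{1..N}"
  define U where "U = (\<Union>s\<in>{..Amax \<mu>}. listset (replicate s B))"
  define \<phi> where "\<phi> = (\<lambda>(v, r). x ^ (v * r))"
  have finB: "finite B" by (simp add: B_def)
  have finU: "finite U" unfolding U_def using finB by (auto intro!: finite_listset)
  have sub: "Sav \<mu> N \<subseteq> part ` U"
  proof
    fix \<alpha> assume a: "\<alpha> \<in> Sav \<mu> N"
    hence p: "is_partition \<alpha>" and sN: "sum_list \<alpha> \<le> N" and nc: "\<not> contains \<alpha> \<mu>" by (auto simp: Sav_def)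
    obtain ps where ps: "part ps = \<alpha>" "length ps = card (set \<alpha>)"
      "\<forall>p\<in>set ps. 1 \<le> fst p \<and> 1 \<le> snd p \<and> fst p * snd p \<le> sum_list \<alpha>"
      using part_exists[OF p] by blast
    have "set ps \<subseteq> B"
    proof
      fix p assume "p \<in> set ps"
      hence h: "1 \<le> fst p" "1 \<le> snd p" "fst p * snd p \<le> N" using ps(3) sN by auto
      have "fst p * 1 \<le> fst p * snd p" by (rule mult_le_mono2) (use h in simp)
      moreover have "1 * snd p \<le> fst p * snd p" by (rule mult_le_mono1) (use h in simp)
      ultimately have "fst p \<le> N" "snd p \<le> N" using h by linarith+
      thus "p \<in> B" using h by (auto simp: B_def mem_Times_iff)
    qed
    moreover have "length ps \<le> Amax \<mu>" using ps(2) Amax_props(1)[OF p nc] by simp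
    ultimately have "ps \<in> U" by (auto simp: U_def listset_replicate)
    thus "\<alpha> \<in> part ` U" using ps(1) by blast
  qed
  have "(\<Sum>\<alpha>\<in>Sav \<mu> N. x ^ sum_list \<alpha>) \<le> (\<Sum>\<alpha>\<in>part ` U. x ^ sum_list \<alpha>)"
    by (rule sum_mono2) (use finU sub x in auto)
  also have "\<dots> \<le> (\<Sum>ps\<in>U. x ^ sum_list (part ps))"
    using sum_image_le[OF finU, of "\<lambda>\<alpha>. x ^ sum_list \<alpha>" part] x by (simp add: comp_def)
  also have "\<dots> = (\<Sum>ps\<in>U. prod_list (map \<phi> ps))" by (simp add: power_part \<phi>_def)
  also have "\<dots> = (\<Sum>s\<le>Amax \<mu>. \<Sum>ps\<in>listset (replicate s B). prod_list (map \<phi> ps))"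
  proof -
    have "finite {ps. length ps = i \<and> set ps \<subseteq> B}" for i
      using finite_lists_length_eq[OF finB, of i] by (simp add: conj_commute)
    thus ?thesis unfolding U_def by (intro sum.UNION_disjoint) (auto simp: listset_replicate)
  qed
  also have "\<dots> = (\<Sum>s\<le>Amax \<mu>. (sum \<phi> B) ^ s)"
    by (intro sum.cong refl) (simp add: sum_listset finB prod_list_replicate)
  finally show ?thesis by (simp add: \<phi>_def B_def)
qed

lemma lower_family:
  obtains M Ws where "\<forall>w\<in>set Ws. 1 \<le> w \<and> w < M" "length Ws + 1 = Amax \<mu>"
    "\<And>(x::real) K R. 0 \<le> x \<Longrightarrow> \<exists>N.
       (\<Sum>(a, r)\<in>Sigma {M<..K} (\<lambda>a. {1..R a}). x ^ (a * r)) *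
         prod_list (map (\<lambda>w. \<Sum>r\<in>{1..R w}. x ^ (w * r)) Ws) \<le> (\<Sum>\<alpha>\<in>Sav \<mu> N. x ^ sum_list \<alpha>)"
proof -
  obtain \<alpha>0 where a0: "is_partition \<alpha>0" "\<not> contains \<alpha>0 \<mu>" "card (set \<alpha>0) = Amax \<mu>"
    using Amax_props(2) by blast
  have ne: "\<alpha>0 \<noteq> []" using a0(3) Amax_props(3) by auto
  define M where "M = hd \<alpha>0"
  have Min: "M \<in> set \<alpha>0" using ne by (simp add: M_def)
  have leM: "\<forall>y\<in>set \<alpha>0. y \<le> M" using a0(1) ne unfolding M_def is_partition_def
    by (cases \<alpha>0) auto
  have pos: "\<forall>y\<in>set \<alpha>0. 1 \<le> y" using a0(1) by (auto simp: is_partition_def Suc_le_eq)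
  define W where "W = set \<alpha>0 - {M}"
  have WM: "\<forall>w\<in>W. 1 \<le> w \<and> w < M" using leM pos by (force simp: W_def)
  have setal: "set \<alpha>0 = insert M W" using Min by (auto simp: W_def)
  have finW: "finite W" by (simp add: W_def)
  define Ws where "Ws = rev (sorted_list_of_set W)"
  have setWs: "set Ws = W" using finW by (simp add: Ws_def)
  have lenWs: "length Ws + 1 = Amax \<mu>"
  proof -
    have "M \<notin> W" by (simp add: W_def)
    hence "card (set \<alpha>0) = card W + 1" using card_insert_disjoint[OF finW] setal by simp
    thus ?thesis using a0(3) by (simp add: Ws_def)
  qed
  have sWs: "sorted_wrt (>) Ws" by (simp add: Ws_def sorted_wrt_rev)
  have ncM: "\<not> cont \<mu> (insert M W)" using a0(1,2) contains_iff_cont[OF mu a0(1)] setal by simp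
  have bound: "\<exists>N. (\<Sum>(a, r)\<in>Sigma {M<..K} (\<lambda>a. {1..R a}). x ^ (a * r)) *
         prod_list (map (\<lambda>w. \<Sum>r\<in>{1..R w}. x ^ (w * r)) Ws) \<le> (\<Sum>\<alpha>\<in>Sav \<mu> N. x ^ sum_list \<alpha>)"
    if x: "0 \<le> x" for x :: real and K R
  proof -
    define B0 where "B0 = Sigma {M<..K} (\<lambda>a. {1..R a})"
    define Bw where "Bw w = {w} \<times> {1..R w}" for w
    define P where "P = listset (B0 # map Bw Ws)"
    define \<phi> where "\<phi> = (\<lambda>(v, r). x ^ (v * r))"
    have finP: "finite P" unfolding P_def by (rule finite_listset) (auto simp: B0_def Bw_def)
    have LS: "map fst qs = Vs \<and> (\<forall>p\<in>set qs. 1 \<le> snd p)" if "qs \<in> listset (map Bw Vs)" for qs Vs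
      using that
    proof (induction Vs arbitrary: qs)
      case Nil thus ?case by simp
    next
      case (Cons v Vs)
      then obtain p xs where pxs: "qs = p # xs" "p \<in> Bw v" "xs \<in> listset (map Bw Vs)"
        by (auto simp: set_Cons_def)
      have "map fst xs = Vs \<and> (\<forall>p\<in>set xs. 1 \<le> snd p)" using Cons.IH[OF pxs(3)] .
      thus ?case using pxs(1,2) by (auto simp: Bw_def)
    qed
    have props: "good ps \<and> part ps \<in> Sav \<mu> N" if ps: "ps \<in> P" and N: "sum_list (part ps) \<le> N" for ps N
    proof -
      obtain a r qs where eq: "ps = (a, r) # qs" and ar: "(a, r) \<in> B0" and qs: "qs \<in> listset (map Bw Ws)"
        using ps by (auto simp: P_def set_Cons_def)
      have mq: "map fst qs = Ws" and sq: "\<forall>p\<in>set qs. 1 \<le> snd p" using LS[OF qs] by auto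
      have aM: "M < a" and r1: "1 \<le> r" using ar by (auto simp: B0_def)
      have fq: "fst ` set qs = W" using mq setWs by (metis list.set_map)
      have g: "good ps"
      proof -
        have "sorted_wrt (>) (map fst qs)" using sWs mq by simp
        hence "sorted_wrt (\<lambda>p q. fst q < fst p) qs" by (simp add: sorted_wrt_map)
        moreover have "\<forall>q\<in>set qs. fst q < a" using fq WM aM by fastforce
        ultimately show ?thesis using sq r1 by (auto simp: good_def eq)
      qed
      have f1: "\<forall>p\<in>set ps. 1 \<le> fst p" using fq WM aM by (auto simp: eq)
      have ip: "is_partition (part ps)" by (rule part_is_partition[OF g f1])
      have sp: "set (part ps) = insert a W" using set_part[of ps] g fq by (auto simp: good_def eq)
      have "\<not> cont \<mu> (insert a W)"
      proof
        assume "cont \<mu> (insert a W)"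
        hence "cont \<mu> (insert M W)"
          by (rule cont_swap_max[OF mu l2 m01, rotated 2]) (use WM aM in auto)
        thus False using ncM by simp
      qed
      hence "\<not> contains (part ps) \<mu>" using contains_iff_cont[OF mu ip] sp by simp
      thus ?thesis using g ip N by (simp add: Sav_def)
    qed
    define N where "N = (\<Sum>ps\<in>P. sum_list (part ps))"
    have PN: "sum_list (part ps) \<le> N" if "ps \<in> P" for ps
      unfolding N_def by (rule member_le_sum[OF that]) (use finP in auto)
    have inj: "inj_on part P" by (rule inj_on_subset[OF inj_on_part]) (use props PN in auto)
    have "(\<Sum>\<alpha>\<in>part ` P. x ^ sum_list \<alpha>) \<le> (\<Sum>\<alpha>\<in>Sav \<mu> N. x ^ sum_list \<alpha>)"
      by (rule sum_mono2[OF finite_Sav]) (use props PN x in auto)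
    moreover have "(\<Sum>\<alpha>\<in>part ` P. x ^ sum_list \<alpha>) = (\<Sum>ps\<in>P. prod_list (map \<phi> ps))"
      by (simp add: sum.reindex[OF inj] power_part \<phi>_def)
    moreover have "(\<Sum>ps\<in>P. prod_list (map \<phi> ps)) = sum \<phi> B0 * prod_list (map (\<lambda>w. sum \<phi> (Bw w)) Ws)"
      unfolding P_def by (subst sum_listset) (auto simp: B0_def Bw_def comp_def)
    moreover have "sum \<phi> (Bw w) = (\<Sum>r\<in>{1..R w}. x ^ (w * r))" for w
    proof -
      have "Bw w = Pair w ` {1..R w}" by (auto simp: Bw_def)
      thus ?thesis by (simp add: sum.reindex inj_on_def \<phi>_def)
    qed
    ultimately show ?thesis by (auto simp: B0_def \<phi>_def)
  qed
  show ?thesis by (rule that[OF _ lenWs bound]) (use WM setWs in auto)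
qed

end


lemma poly_root1_decomp:
  fixes p :: "real poly"
  assumes "p \<noteq> 0"
  obtains e r where "\<And>x. poly p x = (-1) ^ e * (1 - x) ^ e * poly r x" "poly r 1 \<noteq> 0"
proof -
  obtain r where r: "p = [:-1, 1:] ^ order 1 p * r" "\<not> [:-1, 1:] dvd r"
    using order_decomp[OF assms, of 1] by blast
  have "poly r 1 \<noteq> 0" using r(2) by (simp add: poly_eq_0_iff_dvd)
  moreover have "poly p x = (-1) ^ order 1 p * (1 - x) ^ order 1 p * poly r x" for x
  proof -
    have "poly p x = (x - 1) ^ order 1 p * poly r x" by (subst r(1)) (simp add: poly_power)
    also have "(x - 1) ^ order 1 p = (- (1 - x)) ^ order 1 p" by simp
    also have "\<dots> = (-1) ^ order 1 p * (1 - x) ^ order 1 p" by (rule power_minus)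
    finally show ?thesis by simp
  qed
  ultimately show ?thesis using that by blast
qed

lemma alg_id:
  fixes T H c :: real
  assumes T: "T > 0" and H: "H > 0" and em: "e + m = d + s" and D: "D' = a + m"
  shows "c * T ^ d * (H ^ j / H ^ J) = (c * T ^ e) * (H ^ j / T ^ a) * (T ^ D' / (T ^ s * H ^ J))"
proof -
  have 1: "T ^ e * T ^ m = T ^ d * T ^ s" by (metis em power_add)
  have 2: "T ^ D' = T ^ a * T ^ m" by (simp add: D power_add)
  have "(c * T ^ e) * (H ^ j / T ^ a) * (T ^ D' / (T ^ s * H ^ J)) = c * (T ^ e * T ^ m) * H ^ j / (T ^ s * H ^ J)"
    using T H by (simp add: 2 field_simps)
  also have "\<dots> = c * T ^ d * (H ^ j / H ^ J)" using T H by (simp add: 1 field_simps)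
  finally show ?thesis by simp
qed

lemma tr_ev: "eventually (\<lambda>x. f x = g x) F \<Longrightarrow> (g \<longlongrightarrow> l) F \<Longrightarrow> (f \<longlongrightarrow> l) F"
  using tendsto_cong by metis

lemma core_nonalg:
  fixes q :: "nat \<Rightarrow> real poly" and f :: "real \<Rightarrow> real" and A D :: nat
  assumes nz: "\<exists>j\<le>D. q j \<noteq> 0"
    and eq: "\<forall>\<^sub>F x in at_left 1. (\<Sum>j\<le>D. poly (q j) x * f x ^ j) = 0"
    and hinf: "filterlim (\<lambda>x. f x * (1 - x) ^ A) at_top (at_left 1)"
    and small: "\<And>n. ((\<lambda>x. (1 - x) * (f x * (1 - x) ^ A) ^ n) \<longlongrightarrow> 0) (at_left 1)"
  shows False
proof -
  define S where "S = {j. j \<le> D \<and> q j \<noteq> 0}"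
  have finS: "finite S" and neS: "S \<noteq> {}" using nz by (auto simp: S_def)
  have "\<exists>e r. (\<forall>x. poly (q j) x = (-1) ^ e * (1 - x) ^ e * poly r x) \<and> poly r 1 \<noteq> 0" if "j \<in> S" for j
    using poly_root1_decomp[of "q j"] that by (metis (mono_tags, lifting) S_def mem_Collect_eq)
  then obtain e r where er: "\<And>j x. j \<in> S \<Longrightarrow> poly (q j) x = (-1) ^ e j * (1 - x) ^ e j * poly (r j) x"
    "\<And>j. j \<in> S \<Longrightarrow> poly (r j) 1 \<noteq> 0"
    by metis
  define h where "h x = f x * (1 - x) ^ A" for x
  define ex where "ex j = e j + (D - j) * A" for j
  define s where "s = Min (ex ` S)"
  define J where "J = Max {j\<in>S. ex j = s}"
  have sin: "s \<in> ex ` S" unfolding s_def using finS neS by (intro Min_in) auto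
  have sle: "s \<le> ex j" if "j \<in> S" for j unfolding s_def using finS that by auto
  have finJ: "finite {j\<in>S. ex j = s}" using finS by auto
  have neJ: "{j\<in>S. ex j = s} \<noteq> {}" using sin by auto
  have JS: "J \<in> S" and exJ: "ex J = s" using Max_in[OF finJ neJ] unfolding J_def by auto
  have Jmax: "j \<le> J" if "j \<in> S" "ex j = s" for j unfolding J_def using finJ that by auto
  have hpos: "\<forall>\<^sub>F x in at_left 1. h x > 0"
    using hinf unfolding h_def filterlim_at_top_dense by blast
  have tpos: "\<forall>\<^sub>F x in at_left (1::real). 0 < 1 - x"
  proof -
    have "eventually (\<lambda>x. x \<in> {0<..<1::real}) (at_left 1)" by (rule eventually_at_left_real) simp
    thus ?thesis by eventually_elim auto
  qed
  have hinf': "filterlim h at_top (at_left 1)" using hinf by (simp add: h_def[abs_def])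
  have small': "\<And>n. ((\<lambda>x. (1 - x) * h x ^ n) \<longlongrightarrow> 0) (at_left 1)" using small by (simp add: h_def[abs_def])
  have t0: "((\<lambda>x::real. 1 - x) \<longlongrightarrow> 0) (at_left 1)"
  proof -
    have "((\<lambda>x::real. 1 - x) \<longlongrightarrow> 1 - 1) (at_left 1)" by (intro tendsto_intros)
    thus ?thesis by simp
  qed
  define trm where "trm j x = (-1) ^ e j * poly (r j) x * (1 - x) ^ (ex j - s) * (h x ^ j / h x ^ J)" for j x
  have polylim: "((\<lambda>x. poly (r j) x) \<longlongrightarrow> poly (r j) 1) (at_left 1)" for j
    by (intro tendsto_intros)
  have hpow_inf: "filterlim (\<lambda>x. h x ^ n) at_infinity (at_left 1)" if "n > 0" for n
    using filterlim_pow_at_top[OF that hinf'] by (rule filterlim_at_top_imp_at_infinity)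
  have termJ: "(trm J \<longlongrightarrow> (-1) ^ e J * poly (r J) 1) (at_left 1)"
  proof -
    have "\<forall>\<^sub>F x in at_left 1. trm J x = (-1) ^ e J * poly (r J) x"
      using hpos by eventually_elim (simp add: trm_def exJ)
    moreover have "((\<lambda>x. (-1) ^ e J * poly (r J) x) \<longlongrightarrow> (-1) ^ e J * poly (r J) 1) (at_left 1)"
      by (intro tendsto_intros)
    ultimately show ?thesis by (rule tr_ev)
  qed
  have termj: "(trm j \<longlongrightarrow> 0) (at_left 1)" if j: "j \<in> S" "j \<noteq> J" for j
  proof -
    consider "ex j = s" | "ex j > s" "j < J" | "ex j > s" "j > J"
      using sle[OF j(1)] Jmax[OF j(1)] j(2) by fastforce
    thus ?thesis
    proof cases
      case 1
      have jJ: "j < J" using Jmax[OF j(1) 1] j(2) by simp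
      have "\<forall>\<^sub>F x in at_left 1. trm j x = (-1) ^ e j * poly (r j) x / h x ^ (J - j)"
        using hpos
      proof eventually_elim
        case (elim x)
        have "h x ^ J = h x ^ j * h x ^ (J - j)" using jJ by (simp add: power_add[symmetric])
        thus ?case using elim 1 by (simp add: trm_def)
      qed
      moreover have "((\<lambda>x. (-1) ^ e j * poly (r j) x / h x ^ (J - j)) \<longlongrightarrow> 0) (at_left 1)"
        by (rule tendsto_divide_0[OF tendsto_mult[OF tendsto_const polylim] hpow_inf]) (use jJ in simp)
      ultimately show ?thesis by (rule tr_ev)
    next
      case 2
      have "\<forall>\<^sub>F x in at_left 1. trm j x = (-1) ^ e j * poly (r j) x * (1 - x) ^ (ex j - s - 1) * ((1 - x) / h x ^ (J - j))"
        using hpos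
      proof eventually_elim
        case (elim x)
        have "h x ^ J = h x ^ j * h x ^ (J - j)" using 2 by (simp add: power_add[symmetric])
        moreover have "(1 - x) ^ (ex j - s) = (1 - x) ^ (ex j - s - 1) * (1 - x)"
        proof -
          have e: "ex j - s = Suc (ex j - s - 1)" using 2 by simp
          show ?thesis by (metis e power_Suc2)
        qed
        ultimately show ?case using elim by (simp add: trm_def)
      qed
      moreover have "((\<lambda>x. (-1) ^ e j * poly (r j) x * (1 - x) ^ (ex j - s - 1) * ((1 - x) / h x ^ (J - j))) \<longlongrightarrow>
          (-1) ^ e j * poly (r j) 1 * 0 ^ (ex j - s - 1) * 0) (at_left 1)"
        by (rule tendsto_mult[OF tendsto_mult[OF tendsto_mult[OF tendsto_const polylim] tendsto_power[OF t0]] tendsto_divide_0[OF t0 hpow_inf]]) (use 2 in simp)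
      ultimately have "(trm j \<longlongrightarrow> (-1) ^ e j * poly (r j) 1 * 0 ^ (ex j - s - 1) * 0) (at_left 1)" by (rule tr_ev)
      thus ?thesis by simp
    next
      case 3
      have "\<forall>\<^sub>F x in at_left 1. trm j x = (-1) ^ e j * poly (r j) x * (1 - x) ^ (ex j - s - 1) * ((1 - x) * h x ^ (j - J))"
        using hpos
      proof eventually_elim
        case (elim x)
        have "h x ^ j = h x ^ J * h x ^ (j - J)" using 3 by (simp add: power_add[symmetric])
        moreover have "(1 - x) ^ (ex j - s) = (1 - x) ^ (ex j - s - 1) * (1 - x)"
        proof -
          have e: "ex j - s = Suc (ex j - s - 1)" using 3 by simp
          show ?thesis by (metis e power_Suc2)
        qed
        ultimately show ?case using elim by (simp add: trm_def)
      qed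
      moreover have "((\<lambda>x. (-1) ^ e j * poly (r j) x * (1 - x) ^ (ex j - s - 1) * ((1 - x) * h x ^ (j - J))) \<longlongrightarrow>
          (-1) ^ e j * poly (r j) 1 * 0 ^ (ex j - s - 1) * 0) (at_left 1)"
        by (rule tendsto_mult[OF tendsto_mult[OF tendsto_mult[OF tendsto_const polylim] tendsto_power[OF t0]] small'])
      ultimately have "(trm j \<longlongrightarrow> (-1) ^ e j * poly (r j) 1 * 0 ^ (ex j - s - 1) * 0) (at_left 1)" by (rule tr_ev)
      thus ?thesis by simp
    qed
  qed
  have lim: "((\<lambda>x. \<Sum>j\<in>S. trm j x) \<longlongrightarrow> (-1) ^ e J * poly (r J) 1) (at_left 1)"
  proof -
    have "((\<lambda>x. trm J x + (\<Sum>j\<in>S - {J}. trm j x)) \<longlongrightarrow> (-1) ^ e J * poly (r J) 1 + (\<Sum>j\<in>S - {J}. 0)) (at_left 1)"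
      by (intro tendsto_add termJ tendsto_sum termj) auto
    moreover have "(\<Sum>j\<in>S. trm j x) = trm J x + (\<Sum>j\<in>S - {J}. trm j x)" for x
      using finS JS by (simp add: sum.remove)
    ultimately show ?thesis by simp
  qed
  have ev0: "\<forall>\<^sub>F x in at_left 1. (\<Sum>j\<in>S. trm j x) = 0"
    using eq hpos tpos
  proof eventually_elim
    case (elim x)
    define t where "t = 1 - x"
    have t: "t > 0" using elim by (simp add: t_def)
    have fx: "f x = h x / t ^ A" using t by (simp add: h_def t_def)
    have "(\<Sum>j\<le>D. poly (q j) x * f x ^ j) = (\<Sum>j\<in>S. poly (q j) x * f x ^ j)"
      by (rule sum.mono_neutral_right) (auto simp: S_def)
    hence z: "(\<Sum>j\<in>S. poly (q j) x * f x ^ j) = 0" using elim by simp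
    have "(\<Sum>j\<in>S. trm j x) = (\<Sum>j\<in>S. poly (q j) x * f x ^ j) * (t ^ (D * A) / (t ^ s * h x ^ J))"
      unfolding sum_distrib_right
    proof (rule sum.cong[OF refl])
      fix j assume jS: "j \<in> S"
      have jD: "j \<le> D" using jS by (simp add: S_def)
      have fj: "f x ^ j = h x ^ j / t ^ (j * A)" using t
        by (simp add: fx power_divide power_mult[symmetric] mult.commute)
      have "trm j x = ((-1) ^ e j * poly (r j) x) * t ^ (ex j - s) * (h x ^ j / h x ^ J)"
        by (simp add: trm_def t_def)
      also have "\<dots> = (((-1) ^ e j * poly (r j) x) * t ^ e j) * (h x ^ j / t ^ (j * A)) * (t ^ (D * A) / (t ^ s * h x ^ J))"
        by (rule alg_id[OF t elim(2), where m = "(D - j) * A"])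
           (use sle[OF jS] jD in \<open>auto simp: ex_def add_mult_distrib[symmetric]\<close>)
      also have "\<dots> = poly (q j) x * f x ^ j * (t ^ (D * A) / (t ^ s * h x ^ J))"
        using er(1)[OF jS, of x] fj by (simp add: t_def mult_ac)
      finally show "trm j x = poly (q j) x * f x ^ j * (t ^ (D * A) / (t ^ s * h x ^ J))" .
    qed
    thus ?case using z by simp
  qed
  have "((\<lambda>x. \<Sum>j\<in>S. trm j x) \<longlongrightarrow> 0) (at_left 1)"
    using ev0 by (simp add: tendsto_eventually)
  from tendsto_unique[OF _ lim this] have "(-1) ^ e J * poly (r J) 1 = 0" by simp
  thus False using er(2)[OF JS] by simp
qed


definition fmap :: "rat fps \<Rightarrow> real fps" where
  "fmap G = Abs_fps (\<lambda>n. of_rat (G $ n))"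

lemma fmap_nth [simp]: "fmap G $ n = of_rat (G $ n)" by (simp add: fmap_def)

lemma fmap_add: "fmap (G + H) = fmap G + fmap H"
  by (simp add: fps_eq_iff of_rat_add)

lemma fmap_mult: "fmap (G * H) = fmap G * fmap H"
  by (simp add: fps_eq_iff fps_mult_nth of_rat_sum of_rat_mult)

lemma fmap_sum: "fmap (\<Sum>i\<in>I. G i) = (\<Sum>i\<in>I. fmap (G i))"
  by (induction I rule: infinite_finite_induct) (auto simp: fps_eq_iff fmap_add[unfolded fps_eq_iff] of_rat_add)

lemma fmap_power: "fmap (G ^ n) = fmap G ^ n"
proof (induction n)
  case 0 thus ?case by (simp add: fps_eq_iff fps_one_nth)
next
  case (Suc n) thus ?case by (simp add: fmap_mult)
qed

lemma fmap_0 [simp]: "fmap 0 = 0" by (simp add: fps_eq_iff)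

lemma fmap_fps_of_poly: "fmap (fps_of_poly p) = fps_of_poly (map_poly of_rat p)"
  by (simp add: fps_eq_iff coeff_map_poly)

lemma eval_fps_sum_real:
  fixes G :: "'b \<Rightarrow> real fps"
  assumes "finite I" "\<forall>i\<in>I. norm x < fps_conv_radius (G i)"
  shows "eval_fps (\<Sum>i\<in>I. G i) x = (\<Sum>i\<in>I. eval_fps (G i) x) \<and> norm x < fps_conv_radius (\<Sum>i\<in>I. G i)"
  using assms
proof (induction I rule: finite_induct)
  case empty thus ?case by simp
next
  case (insert i I)
  have r: "norm x < fps_conv_radius (\<Sum>i\<in>I. G i)" and e: "eval_fps (\<Sum>i\<in>I. G i) x = (\<Sum>i\<in>I. eval_fps (G i) x)"
    using insert by auto
  have ri: "norm x < fps_conv_radius (G i)" using insert by auto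
  have "eval_fps (G i + (\<Sum>i\<in>I. G i)) x = eval_fps (G i) x + eval_fps (\<Sum>i\<in>I. G i) x"
    by (rule eval_fps_add[OF ri r])
  moreover have "norm x < fps_conv_radius (G i + (\<Sum>i\<in>I. G i))"
  proof -
    have "norm x < min (fps_conv_radius (G i)) (fps_conv_radius (\<Sum>i\<in>I. G i))" using ri r by simp
    thus ?thesis using fps_conv_radius_add[of "G i" "\<Sum>i\<in>I. G i"] by (rule less_le_trans)
  qed
  ultimately show ?case using insert e by simp
qed

lemma fps_to_real:
  fixes P :: "rat poly poly" and F :: "rat fps"
  assumes P: "P \<noteq> 0" and eq: "poly (map_poly fps_of_poly P) F = 0"
    and summ: "\<And>x. 0 < x \<Longrightarrow> x < 1 \<Longrightarrow> summable (\<lambda>n. real_of_rat (F $ n) * x ^ n)"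
  shows "\<exists>q D. (\<exists>j\<le>D. q j \<noteq> (0::real poly)) \<and>
     (\<forall>x. 0 < x \<longrightarrow> x < 1 \<longrightarrow> (\<Sum>j\<le>D. poly (q j) x * (\<Sum>n. real_of_rat (F $ n) * x ^ n) ^ j) = 0)"
proof -
  define D where "D = degree P"
  define q where "q j = map_poly (of_rat :: rat \<Rightarrow> real) (coeff P j)" for j
  define Fr where "Fr = fmap F"
  have degP: "degree (map_poly fps_of_poly P) = D"
    unfolding D_def by (rule degree_map_poly) (simp add: fps_of_poly_eq_iff[of _ 0, simplified])
  have "poly (map_poly fps_of_poly P) F = (\<Sum>j\<le>D. fps_of_poly (coeff P j) * F ^ j)"
    by (simp add: poly_altdef degP coeff_map_poly)
  hence "fmap (\<Sum>j\<le>D. fps_of_poly (coeff P j) * F ^ j) = 0" using eq by simp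
  hence z: "(\<Sum>j\<le>D. fps_of_poly (q j) * Fr ^ j) = 0"
    by (simp add: fmap_sum fmap_mult fmap_power fmap_fps_of_poly q_def Fr_def)
  have nz: "q D \<noteq> 0"
  proof
    assume "q D = 0"
    hence "coeff (q D) 0 = 0 \<and> (\<forall>n. coeff (q D) n = 0)" by simp
    hence "\<forall>n. coeff (coeff P D) n = 0" by (simp add: q_def coeff_map_poly)
    hence "coeff P D = 0" by (simp add: poly_eq_iff)
    thus False using P by (simp add: D_def)
  qed
  have "(\<Sum>j\<le>D. poly (q j) x * (\<Sum>n. real_of_rat (F $ n) * x ^ n) ^ j) = 0" if x: "0 < x" "x < 1" for x
  proof -
    define y where "y = (1 + x) / 2"
    have y: "0 < y" "y < 1" "x < y" using x by (auto simp: y_def)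
    have "ereal (norm y) \<le> conv_radius (\<lambda>n. real_of_rat (F $ n))"
      by (rule conv_radius_geI) (use summ[OF y(1,2)] in simp)
    moreover have "ereal (norm x) < ereal (norm y)" using x y by simp
    ultimately have "ereal (norm x) < conv_radius (\<lambda>n. real_of_rat (F $ n))"
      using less_le_trans by blast
    hence rad: "norm x < fps_conv_radius Fr"
      by (simp add: fps_conv_radius_def Fr_def)
    have radj: "norm x < fps_conv_radius (fps_of_poly (q j) * Fr ^ j)" for j
    proof -
      have "fps_conv_radius Fr \<le> fps_conv_radius (fps_of_poly (q j) * Fr ^ j)"
        using fps_conv_radius_mult[of "fps_of_poly (q j)" "Fr ^ j"] fps_conv_radius_power[of Fr j]
        by simp
      thus ?thesis using rad by (meson less_le_trans)
    qed
    have "0 = eval_fps (\<Sum>j\<le>D. fps_of_poly (q j) * Fr ^ j) x" using z by simp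
    also have "\<dots> = (\<Sum>j\<le>D. eval_fps (fps_of_poly (q j) * Fr ^ j) x)"
      using eval_fps_sum_real[of "{..D}" x "\<lambda>j. fps_of_poly (q j) * Fr ^ j"] radj by simp
    also have "\<dots> = (\<Sum>j\<le>D. poly (q j) x * eval_fps Fr x ^ j)"
    proof (intro sum.cong refl)
      fix j
      have r2: "norm x < fps_conv_radius (Fr ^ j)" using less_le_trans[OF rad fps_conv_radius_power] .
      have "eval_fps (fps_of_poly (q j) * Fr ^ j) x = eval_fps (fps_of_poly (q j)) x * eval_fps (Fr ^ j) x"
        by (rule eval_fps_mult) (use r2 in simp_all)
      thus "eval_fps (fps_of_poly (q j) * Fr ^ j) x = poly (q j) x * eval_fps Fr x ^ j"
        using eval_fps_power[OF rad] by simp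
    qed
    also have "eval_fps Fr x = (\<Sum>n. real_of_rat (F $ n) * x ^ n)"
      by (simp add: eval_fps_def Fr_def)
    finally show ?thesis by simp
  qed
  thus ?thesis using nz by blast
qed


lemma nat_floor_le: "0 \<le> y \<Longrightarrow> real (nat \<lfloor>y\<rfloor>) \<le> y"
  by (simp add: of_nat_nat)

lemma geom_lower:
  fixes t :: real and w :: nat
  assumes w: "1 \<le> w" and t: "0 < t" and wt: "4 * w * t \<le> 1"
  shows "1 / (8 * w * t) \<le> (\<Sum>r\<in>{1..nat \<lfloor>1 / (2 * w * t)\<rfloor>}. (1 - t) ^ (w * r))"
proof -
  define R where "R = nat \<lfloor>1 / (2 * w * t)\<rfloor>"
  have wpos: "(0::real) < w" using w by simp
  have Rle: "real R \<le> 1 / (2 * w * t)" using t wpos by (simp add: R_def)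
  have Rge: "real R \<ge> 1 / (2 * w * t) - 1" unfolding R_def by linarith
  have big: "1 / (2 * w * t) \<ge> 2" using wt t wpos by (simp add: field_simps)
  have trm1: "(1 - t) ^ (w * r) \<ge> 1 / 2" if r: "r \<in> {1..R}" for r
  proof -
    have "1 + real (w * r) * (- t) \<le> (1 + - t) ^ (w * r)"
    proof (rule Bernoulli_inequality)
      have "t * 1 \<le> t * (4 * w)" using t w by (intro mult_left_mono) auto
      moreover have "t * (4 * w) \<le> 1" using wt by (simp add: mult_ac)
      ultimately show "-1 \<le> - t" by linarith
    qed
    moreover have "real (w * r) * t \<le> 1 / 2"
    proof -
      have "real r \<le> real R" using r by simp
      hence "real r \<le> 1 / (2 * w * t)" using Rle by linarith
      hence "real r * (2 * w * t) \<le> 1" using t wpos by (simp add: field_simps)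
      thus ?thesis by (simp add: field_simps)
    qed
    ultimately show ?thesis by simp
  qed
  have "(\<Sum>r\<in>{1..R}. (1 / 2 :: real)) \<le> (\<Sum>r\<in>{1..R}. (1 - t) ^ (w * r))"
    by (rule sum_mono) (rule trm1)
  hence "real R / 2 \<le> (\<Sum>r\<in>{1..R}. (1 - t) ^ (w * r))" by simp
  moreover have "1 / (8 * w * t) \<le> real R / 2"
  proof -
    have "1 / (4 * w * t) \<le> 1 / (2 * w * t) - 1" using big by (simp add: field_simps)
    hence "1 / (4 * w * t) \<le> real R" using Rge by linarith
    thus ?thesis by (simp add: field_simps)
  qed
  ultimately have "1 / (8 * w * t) \<le> (\<Sum>r\<in>{1..R}. (1 - t) ^ (w * r))" by linarith
  thus ?thesis by (simp only: R_def)
qed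

lemma harm_diff: "M \<le> K \<Longrightarrow> (\<Sum>a\<in>{M<..K}. 1 / real a) = harm K - harm M"
proof -
  assume MK: "M \<le> K"
  have "{1..K} = {1..M} \<union> {M<..K}" using MK by auto
  hence "harm K = (\<Sum>a\<in>{1..M}. 1 / real a) + (\<Sum>a\<in>{M<..K}. 1 / real a)"
    by (simp add: harm_def inverse_eq_divide sum.union_disjoint ivl_disj_int)
  thus ?thesis by (simp add: harm_def inverse_eq_divide)
qed

lemma B0_lower:
  fixes t :: real and M :: nat
  assumes t: "0 < t" and K: "K = nat \<lfloor>1 / (4 * t)\<rfloor>" and MK: "M \<le> K"
  shows "(harm K - harm M) / (8 * t) \<le>
     (\<Sum>(a, r)\<in>Sigma {M<..K} (\<lambda>a. {1..nat \<lfloor>1 / (2 * a * t)\<rfloor>}). (1 - t) ^ (a * r))"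
proof -
  have "(\<Sum>a\<in>{M<..K}. 1 / real a) / (8 * t) = (\<Sum>a\<in>{M<..K}. 1 / (8 * a * t))"
    unfolding sum_divide_distrib by (intro sum.cong refl) (simp add: field_simps)
  also have "\<dots> \<le> (\<Sum>a\<in>{M<..K}. \<Sum>r\<in>{1..nat \<lfloor>1 / (2 * a * t)\<rfloor>}. (1 - t) ^ (a * r))"
  proof (rule sum_mono)
    fix a assume a: "a \<in> {M<..K}"
    have "a \<le> K" using a by simp
    hence "real a \<le> real (nat \<lfloor>1 / (4 * t)\<rfloor>)" using K by simp
    also have "\<dots> \<le> 1 / (4 * t)" using t by (simp add: nat_floor_le)
    finally have "real a \<le> 1 / (4 * t)" .
    hence "4 * a * t \<le> 1" using t by (simp add: field_simps)
    thus "1 / (8 * a * t) \<le> (\<Sum>r\<in>{1..nat \<lfloor>1 / (2 * a * t)\<rfloor>}. (1 - t) ^ (a * r))"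
      by (intro geom_lower) (use a t in auto)
  qed
  also have "\<dots> = (\<Sum>(a, r)\<in>Sigma {M<..K} (\<lambda>a. {1..nat \<lfloor>1 / (2 * a * t)\<rfloor>}). (1 - t) ^ (a * r))"
    by (subst sum.Sigma) auto
  finally show ?thesis by (simp only: harm_diff[OF MK])
qed

lemma geom_upper:
  fixes t :: real and v :: nat
  assumes v: "1 \<le> v" and t: "0 < t" "t < 1"
  shows "(\<Sum>r\<in>{1..N}. (1 - t) ^ (v * r)) \<le> 1 / (v * t)"
    and "(\<Sum>r\<in>{1..N}. (1 - t) ^ (v * r)) \<le> (1 - t) ^ v / t"
proof -
  define y where "y = (1 - t) ^ v"
  have y0: "0 \<le> y" using t by (simp add: y_def)
  have yle: "y \<le> 1 - t" using t v by (simp add: y_def power_le_one power_decreasing[of 1 v "1 - t", simplified])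
  hence y1: "y < 1" using t by simp
  have "(\<Sum>r\<in>{1..N}. (1 - t) ^ (v * r)) = (\<Sum>r\<in>{1..N}. y ^ r)" by (simp add: y_def power_mult)
  also have "\<dots> \<le> y / (1 - y)"
  proof -
    have "(\<Sum>r\<in>{1..N}. y ^ r) = y * (\<Sum>r<N. y ^ r)"
      by (simp add: sum.atLeast1_atMost_eq sum_distrib_left)
    also have "(\<Sum>r<N. y ^ r) = (1 - y ^ N) / (1 - y)" using y1 by (simp add: sum_gp_strict)
    also have "\<dots> \<le> 1 / (1 - y)" using y0 y1 by (simp add: divide_right_mono)
    finally show ?thesis using y0 by (simp add: mult_left_mono divide_inverse)
  qed
  finally have S: "(\<Sum>r\<in>{1..N}. (1 - t) ^ (v * r)) \<le> y / (1 - y)" .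
  have "y * (1 + v * t) \<le> 1"
  proof -
    have "1 + real v * t \<le> (1 + t) ^ v" by (rule Bernoulli_inequality) (use t in simp)
    hence "y * (1 + v * t) \<le> (1 - t) ^ v * (1 + t) ^ v" using y0 by (simp add: y_def mult_left_mono)
    also have "\<dots> = (1 - t * t) ^ v" by (simp add: power_mult_distrib[symmetric] algebra_simps)
    also have "\<dots> \<le> 1" using t by (intro power_le_one) (auto simp: mult_le_one)
    finally show ?thesis .
  qed
  hence "y / (1 - y) \<le> 1 / (v * t)" using y1 y0 t v by (simp add: field_simps)
  thus "(\<Sum>r\<in>{1..N}. (1 - t) ^ (v * r)) \<le> 1 / (v * t)" using S by linarith
  have "y / (1 - y) \<le> y / t" using y0 yle t by (intro divide_left_mono) auto
  thus "(\<Sum>r\<in>{1..N}. (1 - t) ^ (v * r)) \<le> (1 - t) ^ v / t" using S by (simp add: y_def)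
qed

lemma harm_le_ln: "n \<ge> 1 \<Longrightarrow> harm n \<le> 1 + ln (real n)"
proof (induction n rule: dec_induct)
  case base thus ?case by (simp add: harm_def)
next
  case (step n)
  have n: "real n \<ge> 1" using step by simp
  have "ln (real n / real (Suc n)) \<le> real n / real (Suc n) - 1" by (rule ln_le_minus_one) (use n in simp)
  also have "\<dots> = - 1 / real (Suc n)" by (simp add: field_simps)
  finally have "1 / real (Suc n) \<le> ln (real (Suc n)) - ln (real n)"
    using n by (simp add: ln_div)
  thus ?case using step by (simp add: harm_Suc inverse_eq_divide)
qed


lemma pow_small:
  fixes t :: real
  assumes t: "0 < t" "t < 1"
  shows "(1 - t) ^ (nat \<lceil>1 / t\<rceil> ^ 2) \<le> t"
proof -
  define c where "c = nat \<lceil>1 / t\<rceil>"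
  have c: "real c \<ge> 1 / t" unfolding c_def by linarith
  have c0: "1 / t > 0" using t by simp
  have "(1 - t) ^ (c ^ 2) \<le> exp (- t) ^ (c ^ 2)"
    by (rule power_mono) (use exp_ge_add_one_self[of "- t"] t in auto)
  also have "\<dots> = exp (- t * real (c ^ 2))" by (simp add: exp_of_nat_mult[symmetric] mult.commute)
  also have "\<dots> \<le> exp (- (1 / t))"
  proof -
    have "(1 / t) * (1 / t) \<le> real c * real c" using c c0 by (intro mult_mono) auto
    hence "1 / t \<le> t * (real c * real c)" using t by (simp add: field_simps)
    thus ?thesis by (simp add: power2_eq_square)
  qed
  also have "\<dots> \<le> t"
  proof -
    have "1 / t \<le> exp (1 / t)" using exp_ge_add_one_self[of "1 / t"] by linarith
    hence "1 \<le> t * exp (1 / t)" using t by (simp add: field_simps)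
    thus ?thesis using t by (simp add: exp_minus field_simps)
  qed
  finally show ?thesis by (simp add: c_def)
qed

lemma T_bound:
  fixes t :: real
  assumes t: "0 < t" "t < 1"
  shows "(\<Sum>(v, r)\<in>{1..N}\<times>{1..N}. (1 - t) ^ (v * r)) \<le> 5 * (1 + ln (1 / t)) / t"
proof -
  define K where "K = nat \<lceil>1 / t\<rceil> ^ 2"
  define g where "g v = (\<Sum>r\<in>{1..N}. (1 - t) ^ (v * r))" for v
  have g0: "0 \<le> g v" for v using t by (simp add: g_def sum_nonneg)
  have "(\<Sum>(v, r)\<in>{1..N}\<times>{1..N}. (1 - t) ^ (v * r)) = (\<Sum>v\<in>{1..N}. g v)"
    by (simp add: g_def sum.cartesian_product)
  also have "\<dots> = (\<Sum>v\<in>{1..N} \<inter> {..K}. g v) + (\<Sum>v\<in>{1..N} \<inter> {K<..}. g v)"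
  proof -
    have "{1..N} = ({1..N} \<inter> {..K}) \<union> ({1..N} \<inter> {K<..})" by auto
    moreover have "({1..N} \<inter> {..K}) \<inter> ({1..N} \<inter> {K<..}) = {}" by auto
    ultimately show ?thesis by (metis finite_Int finite_atLeastAtMost sum.union_disjoint)
  qed
  also have "(\<Sum>v\<in>{1..N} \<inter> {..K}. g v) \<le> (\<Sum>v\<in>{1..K}. 1 / (v * t))"
  proof -
    have "(\<Sum>v\<in>{1..N} \<inter> {..K}. g v) \<le> (\<Sum>v\<in>{1..N} \<inter> {..K}. 1 / (v * t))"
      by (rule sum_mono) (use geom_upper(1)[OF _ t] in \<open>auto simp: g_def\<close>)
    also have "\<dots> \<le> (\<Sum>v\<in>{1..K}. 1 / (v * t))"
      by (rule sum_mono2) (use t in auto)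
    finally show ?thesis .
  qed
  also have "(\<Sum>v\<in>{1..K}. 1 / (v * t)) = harm K / t"
    by (simp add: harm_def sum_divide_distrib inverse_eq_divide)
  also have "(\<Sum>v\<in>{1..N} \<inter> {K<..}. g v) \<le> 1 / t"
  proof -
    have "(\<Sum>v\<in>{1..N} \<inter> {K<..}. g v) \<le> (\<Sum>v\<in>{1..N} \<inter> {K<..}. (1 - t) ^ v / t)"
      by (rule sum_mono) (use geom_upper(2)[OF _ t] in \<open>auto simp: g_def\<close>)
    also have "\<dots> = (\<Sum>v\<in>{1..N} \<inter> {K<..}. (1 - t) ^ v) / t" by (simp add: sum_divide_distrib)
    also have "\<dots> \<le> (\<Sum>v\<in>{Suc K..N}. (1 - t) ^ v) / t"
      by (intro divide_right_mono sum_mono2) (use t in auto)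
    also have "(\<Sum>v\<in>{Suc K..N}. (1 - t) ^ v) \<le> (1 - t) ^ Suc K / t"
    proof (cases "N < Suc K")
      case True thus ?thesis using t by simp
    next
      case False
      have "(\<Sum>v\<in>{Suc K..N}. (1 - t) ^ v) = ((1 - t) ^ Suc K - (1 - t) ^ Suc N) / t"
        using False t by (simp add: sum_gp)
      also have "\<dots> \<le> (1 - t) ^ Suc K / t" using t by (intro divide_right_mono) auto
      finally show ?thesis .
    qed
    also have "(1 - t) ^ Suc K \<le> (1 - t) ^ K" using t by (intro power_decreasing) auto
    also have "(1 - t) ^ K \<le> t" unfolding K_def by (rule pow_small[OF t])
    finally show ?thesis using t by (simp add: divide_right_mono)
  qed
  finally have S: "(\<Sum>(v, r)\<in>{1..N}\<times>{1..N}. (1 - t) ^ (v * r)) \<le> (harm K + 1) / t"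
    by (simp add: add_divide_distrib)
  have K1: "K \<ge> 1"
  proof -
    have "1 / t > 0" using t by simp
    hence "nat \<lceil>1 / t\<rceil> \<ge> 1" by linarith
    thus ?thesis unfolding K_def by (metis one_le_power)
  qed
  have "harm K \<le> 1 + ln (real K)" by (rule harm_le_ln[OF K1])
  also have "ln (real K) \<le> 2 + 2 * ln (1 / t)"
  proof -
    have tt: "0 < 1 / t" using t by simp
    hence "- 1 < 1 / t" by linarith
    hence c0: "0 \<le> \<lceil>1 / t\<rceil>" by simp
    have "real (nat \<lceil>1 / t\<rceil>) = of_int \<lceil>1 / t\<rceil>" using c0 by simp
    also have "\<dots> \<le> 1 / t + 1" using ceiling_correct[of "1 / t"] by linarith
    also have "\<dots> \<le> 2 / t" using t by (simp add: field_simps)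
    finally have c: "real (nat \<lceil>1 / t\<rceil>) \<le> 2 / t" .
    have "real K \<le> (2 / t) ^ 2" unfolding K_def using c by (simp add: power_mono)
    hence "ln (real K) \<le> ln ((2 / t) ^ 2)" using K1 by (subst ln_le_cancel_iff) auto
    also have "\<dots> = 2 * (ln 2 + ln (1 / t))" using t by (simp add: ln_realpow ln_div ln_mult)
    also have "\<dots> \<le> 2 + 2 * ln (1 / t)" using ln_2_less_1 by simp
    finally show ?thesis .
  qed
  finally have hk: "(harm K :: real) \<le> 3 + 2 * ln (1 / t)" by simp
  have l0: "0 \<le> ln (1 / t)" using t by (intro ln_ge_zero) simp
  have "(harm K :: real) + 1 \<le> 5 * (1 + ln (1 / t))" using hk l0 by (simp add: algebra_simps)
  hence "(harm K + 1) / t \<le> 5 * (1 + ln (1 / t)) / t" using t by (simp add: divide_right_mono)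
  thus ?thesis using S by linarith
qed

lemma tlog_to_0:
  "((\<lambda>x::real. (1 - x) * (1 + ln (1 / (1 - x))) ^ k) \<longlongrightarrow> 0) (at_left 1)"
proof -
  define y where "y x = 1 + ln (1 / (1 - x))" for x :: real
  have ylim: "filterlim y at_top (at_left 1)" unfolding y_def by real_asymp
  have "((\<lambda>x. y x ^ k / exp (y x)) \<longlongrightarrow> 0) (at_left 1)"
    by (rule filterlim_compose[OF tendsto_power_div_exp_0 ylim])
  hence "((\<lambda>x. exp 1 * (y x ^ k / exp (y x))) \<longlongrightarrow> exp 1 * 0) (at_left 1)"
    by (intro tendsto_mult tendsto_const)
  moreover have "\<forall>\<^sub>F x in at_left 1. exp 1 * (y x ^ k / exp (y x)) = (1 - x) * (1 + ln (1 / (1 - x))) ^ k"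
  proof -
    have "eventually (\<lambda>x. x \<in> {0<..<1::real}) (at_left 1)" by (rule eventually_at_left_real) simp
    thus ?thesis
    proof eventually_elim
      case (elim x)
      hence "exp (y x) = exp 1 / (1 - x)" by (simp add: y_def exp_add)
      thus ?case using elim by (simp add: y_def)
    qed
  qed
  ultimately show ?thesis using tendsto_cong by fastforce
qed


lemma prod_list_mono_nonneg:
  fixes g G :: "'a \<Rightarrow> real"
  assumes "\<forall>w\<in>set ws. 0 \<le> g w \<and> g w \<le> G w"
  shows "prod_list (map g ws) \<le> prod_list (map G ws) \<and> 0 \<le> prod_list (map g ws)"
  using assms
proof (induction ws)
  case Nil thus ?case by simp
next
  case (Cons w ws)
  thus ?case by (auto intro!: mult_mono mult_nonneg_nonneg)
qed

lemma prod_list_div: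
  fixes a :: "'a \<Rightarrow> real"
  shows "prod_list (map (\<lambda>w. a w / t) ws) = prod_list (map a ws) / t ^ length ws"
  by (induction ws) auto

lemma U_bound:
  fixes t :: real and A :: nat
  assumes t: "0 < t" "t \<le> 1" and L: "1 \<le> LL"
  shows "(\<Sum>s\<le>A. (LL / t) ^ s) * t ^ A \<le> real (A + 1) * LL ^ A"
proof -
  have "(\<Sum>s\<le>A. (LL / t) ^ s) * t ^ A = (\<Sum>s\<le>A. LL ^ s * t ^ (A - s))"
    unfolding sum_distrib_right
  proof (intro sum.cong refl)
    fix s assume "s \<in> {..A}"
    hence "t ^ A = t ^ s * t ^ (A - s)" by (simp add: power_add[symmetric])
    thus "(LL / t) ^ s * t ^ A = LL ^ s * t ^ (A - s)" using t by (simp add: power_divide)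
  qed
  also have "\<dots> \<le> (\<Sum>s\<le>A. LL ^ A)"
  proof (rule sum_mono)
    fix s assume s: "s \<in> {..A}"
    have "LL ^ s * t ^ (A - s) \<le> LL ^ s * 1"
      using t L by (intro mult_left_mono power_le_one) auto
    also have "\<dots> \<le> LL ^ A" using L s by (simp add: power_increasing)
    finally show "LL ^ s * t ^ (A - s) \<le> LL ^ A" .
  qed
  finally show ?thesis by simp
qed

theorem main_result:
  fixes \<mu> :: "nat list"
  assumes mu: "is_strict_partition \<mu>"
    and l2: "length \<mu> \<ge> 2"
    and m01: "\<mu> ! 0 = \<mu> ! 1 + 1"
  shows "\<not> algebraic_over_rat_z (Av_gf \<mu>)"
proof
  assume "algebraic_over_rat_z (Av_gf \<mu>)"
  then obtain P :: "rat poly poly" where P: "P \<noteq> 0" "poly (map_poly fps_of_poly P) (Av_gf \<mu>) = 0"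
    unfolding algebraic_over_rat_z_def by blast
  define c where "c n = real (card (Av n \<mu>))" for n
  define A where "A = Amax \<mu>"
  define U where "U t = (\<Sum>s\<le>A. (5 * (1 + ln (1 / t)) / t) ^ s)" for t :: real
  have c0: "0 \<le> c n" for n by (simp add: c_def)
  have coef: "real_of_rat (Av_gf \<mu> $ n) = c n" for n by (simp add: Av_gf_def c_def of_rat_of_nat_eq)
  have partial_le: "(\<Sum>n\<le>N. c n * x ^ n) \<le> U (1 - x)" if x: "0 < x" "x < 1" for x N
  proof -
    have "(\<Sum>n\<le>N. c n * x ^ n) = (\<Sum>\<alpha>\<in>Sav \<mu> N. x ^ sum_list \<alpha>)"
      by (simp add: c_def partial_sum_Sav)
    also have "\<dots> \<le> (\<Sum>s\<le>Amax \<mu>. (\<Sum>(v, r)\<in>{1..N}\<times>{1..N}. x ^ (v * r)) ^ s)"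
      using upper_sum[OF mu l2 m01, of x N] x by simp
    also have "\<dots> \<le> U (1 - x)"
      unfolding U_def A_def
    proof (rule sum_mono)
      fix s
      have "(\<Sum>(v, r)\<in>{1..N}\<times>{1..N}. x ^ (v * r)) \<le> 5 * (1 + ln (1 / (1 - x))) / (1 - x)"
        using T_bound[of "1 - x" N] x by simp
      moreover have "0 \<le> (\<Sum>(v, r)\<in>{1..N}\<times>{1..N}. x ^ (v * r))"
        using x by (intro sum_nonneg) auto
      ultimately show "(\<Sum>(v, r)\<in>{1..N}\<times>{1..N}. x ^ (v * r)) ^ s \<le> (5 * (1 + ln (1 / (1 - x))) / (1 - x)) ^ s"
        by (intro power_mono) auto
    qed
    finally show ?thesis .
  qed
  have summ: "summable (\<lambda>n. c n * x ^ n)" if x: "0 < x" "x < 1" for x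
    by (rule bounded_imp_summable[where B = "U (1 - x)"]) (use c0 x partial_le in auto)
  define f where "f x = (\<Sum>n. c n * x ^ n)" for x
  have f_le: "f x \<le> U (1 - x)" if x: "0 < x" "x < 1" for x
    unfolding f_def
  proof (rule suminf_le_const[OF summ[OF x]])
    fix n
    show "(\<Sum>k<n. c k * x ^ k) \<le> U (1 - x)"
    proof (cases n)
      case 0
      have "(\<Sum>k<Suc 0. c k * x ^ k) \<le> U (1 - x)" using partial_le[OF x, of 0] by simp
      moreover have "0 \<le> c 0" by (rule c0)
      ultimately show ?thesis using 0 by simp
    next
      case (Suc m)
      thus ?thesis using partial_le[OF x, of m] by (simp add: lessThan_Suc_atMost)
    qed
  qed
  have partial_le_f: "(\<Sum>n\<le>N. c n * x ^ n) \<le> f x" if x: "0 < x" "x < 1" for x N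
    unfolding f_def by (rule sum_le_suminf[OF summ[OF x]]) (use c0 x in auto)
  obtain q D where qD: "\<exists>j\<le>D. q j \<noteq> (0 :: real poly)"
    "\<forall>x. 0 < x \<longrightarrow> x < 1 \<longrightarrow> (\<Sum>j\<le>D. poly (q j) x * (\<Sum>n. real_of_rat (Av_gf \<mu> $ n) * x ^ n) ^ j) = 0"
    using fps_to_real[OF P] summ by (auto simp: coef)
  have ev01: "eventually (\<lambda>x. x \<in> {0<..<1::real}) (at_left 1)" by (rule eventually_at_left_real) simp
  have eq: "\<forall>\<^sub>F x in at_left 1. (\<Sum>j\<le>D. poly (q j) x * f x ^ j) = 0"
    using ev01
  proof eventually_elim
    case (elim x)
    hence "(\<Sum>j\<le>D. poly (q j) x * (\<Sum>n. real_of_rat (Av_gf \<mu> $ n) * x ^ n) ^ j) = 0" using qD(2) by simp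
    moreover have "(\<Sum>n. real_of_rat (Av_gf \<mu> $ n) * x ^ n) = f x" unfolding f_def coef ..
    ultimately show ?case by simp
  qed
  obtain Ws M where MW: "\<forall>w\<in>set Ws. 1 \<le> w \<and> w < M" "length Ws + 1 = Amax \<mu>"
    "\<And>(x::real) K R. 0 \<le> x \<Longrightarrow> \<exists>N.
       (\<Sum>(a, r)\<in>Sigma {M<..K} (\<lambda>a. {1..R a}). x ^ (a * r)) *
         prod_list (map (\<lambda>w. \<Sum>r\<in>{1..R w}. x ^ (w * r)) Ws) \<le> (\<Sum>\<alpha>\<in>Sav \<mu> N. x ^ sum_list \<alpha>)"
    apply (rule lower_family[OF mu l2 m01])
    apply (rule that)
      apply assumption+
    done
  define cW where "cW = prod_list (map (\<lambda>w. 1 / (8 * real w)) Ws)"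
  have cW: "0 < cW" unfolding cW_def using MW(1)
    by (induction Ws) auto
  define t0 where "t0 = 1 / (4 * (real M + 1))"
  have t0: "0 < t0" "t0 < 1" by (auto simp: t0_def field_simps)
  have evlow: "eventually (\<lambda>x. x \<in> {1 - t0<..<1::real}) (at_left 1)"
    by (rule eventually_at_left_real) (use t0 in simp)
  have lowb: "\<forall>\<^sub>F x in at_left 1. cW / 8 * (- harm M + ln (1 / (4 * (1 - x)))) \<le> f x * (1 - x) ^ A"
    using evlow
  proof eventually_elim
    case (elim x)
    define t where "t = 1 - x"
    have t: "0 < t" "t < t0" "t < 1" using elim t0 by (auto simp: t_def)
    have x: "0 < x" "x < 1" using elim t0 by auto
    have tM: "4 * (real M + 1) * t \<le> 1" using t by (simp add: t0_def field_simps)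
    define K where "K = nat \<lfloor>1 / (4 * t)\<rfloor>"
    define R where "R a = nat \<lfloor>1 / (2 * real a * t)\<rfloor>" for a :: nat
    have MK: "M \<le> K"
    proof -
      have "real M \<le> 1 / (4 * t)" using tM t by (simp add: field_simps)
      thus ?thesis unfolding K_def by (simp add: le_nat_floor le_floor_iff)
    qed
    obtain N where N: "(\<Sum>(a, r)\<in>Sigma {M<..K} (\<lambda>a. {1..R a}). x ^ (a * r)) *
         prod_list (map (\<lambda>w. \<Sum>r\<in>{1..R w}. x ^ (w * r)) Ws) \<le> (\<Sum>\<alpha>\<in>Sav \<mu> N. x ^ sum_list \<alpha>)"
      using MW(3)[of x K R] x by auto
    have B0: "(harm K - harm M) / (8 * t) \<le> (\<Sum>(a, r)\<in>Sigma {M<..K} (\<lambda>a. {1..R a}). x ^ (a * r))"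
      using B0_lower[OF t(1) K_def MK] by (simp add: t_def R_def)
    have hKM: "0 \<le> (harm K - harm M :: real)" using harm_mono[OF MK, where 'a=real] by simp
    have PW: "prod_list (map (\<lambda>w. 1 / (8 * real w * t)) Ws) \<le> prod_list (map (\<lambda>w. \<Sum>r\<in>{1..R w}. x ^ (w * r)) Ws)
         \<and> 0 \<le> prod_list (map (\<lambda>w. 1 / (8 * real w * t)) Ws)"
    proof (rule prod_list_mono_nonneg, intro ballI conjI)
      fix w assume w: "w \<in> set Ws"
      show "0 \<le> 1 / (8 * real w * t)" using t by simp
      have "4 * real w * t \<le> 4 * (real M + 1) * t" using MW(1) w t by (intro mult_right_mono) auto
      hence "4 * w * t \<le> 1" using tM by linarith
      thus "1 / (8 * real w * t) \<le> (\<Sum>r\<in>{1..R w}. x ^ (w * r))"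
        using geom_lower[of w t] MW(1) w t by (simp add: R_def t_def)
    qed
    have cWt: "prod_list (map (\<lambda>w. 1 / (8 * real w * t)) Ws) = cW / t ^ length Ws"
    proof -
      have e: "(\<lambda>w. 1 / (8 * real w * t)) = (\<lambda>w. (1 / (8 * real w)) / t)" by (rule ext) simp
      show ?thesis unfolding e cW_def by (rule prod_list_div)
    qed
    have "(harm K - harm M) / (8 * t) * (cW / t ^ length Ws) \<le> f x"
    proof -
      have "(harm K - harm M) / (8 * t) * (cW / t ^ length Ws) \<le>
          (\<Sum>(a, r)\<in>Sigma {M<..K} (\<lambda>a. {1..R a}). x ^ (a * r)) * prod_list (map (\<lambda>w. \<Sum>r\<in>{1..R w}. x ^ (w * r)) Ws)"
      proof -
        have S0: "0 \<le> (\<Sum>(a, r)\<in>Sigma {M<..K} (\<lambda>a. {1..R a}). x ^ (a * r))"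
          using x by (intro sum_nonneg) auto
        show ?thesis using B0 PW cWt hKM t S0 by (intro mult_mono) auto
      qed
      also have "\<dots> \<le> (\<Sum>\<alpha>\<in>Sav \<mu> N. x ^ sum_list \<alpha>)" by (rule N)
      also have "\<dots> = (\<Sum>n\<le>N. c n * x ^ n)" by (simp add: c_def partial_sum_Sav)
      also have "\<dots> \<le> f x" by (rule partial_le_f[OF x])
      finally show ?thesis .
    qed
    hence i1: "(harm K - harm M) / (8 * t) * (cW / t ^ length Ws) * t ^ A \<le> f x * t ^ A"
      using t by (intro mult_right_mono) auto
    have i2: "(harm K - harm M) / (8 * t) * (cW / t ^ length Ws) * t ^ A = cW / 8 * (harm K - harm M)"
    proof -
      have "t ^ A = t * t ^ length Ws" using MW(2) by (simp add: A_def[symmetric]) (metis Suc_eq_plus1 power_Suc)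
      thus ?thesis using t by (simp add: field_simps)
    qed
    have i3: "- harm M + ln (1 / (4 * t)) \<le> harm K - harm M"
    proof -
      have "1 / (4 * t) \<le> real K + 1" unfolding K_def using t by linarith
      hence "ln (1 / (4 * t)) \<le> ln (real K + 1)" using t by (subst ln_le_cancel_iff) auto
      also have "\<dots> \<le> harm K" by (rule ln_le_harm)
      finally show ?thesis by simp
    qed
    have i4: "cW / 8 * (- harm M + ln (1 / (4 * t))) \<le> cW / 8 * (harm K - harm M)"
      using i3 cW by (intro mult_left_mono) auto
    have "cW / 8 * (- harm M + ln (1 / (4 * t))) \<le> f x * t ^ A"
      using i1 i2 i4 by linarith
    thus ?case by (simp add: t_def)
  qed
  have lnlim: "filterlim (\<lambda>x::real. ln (1 / (4 * (1 - x)))) at_top (at_left 1)" by real_asymp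
  have hinf: "filterlim (\<lambda>x. f x * (1 - x) ^ A) at_top (at_left 1)"
  proof (rule filterlim_at_top_mono[OF _ lowb])
    show "filterlim (\<lambda>x. cW / 8 * (- harm M + ln (1 / (4 * (1 - x))))) at_top (at_left 1)"
      by (rule filterlim_tendsto_pos_mult_at_top[OF tendsto_const])
         (use cW in simp, rule filterlim_tendsto_add_at_top[OF tendsto_const lnlim])
  qed
  have small: "((\<lambda>x. (1 - x) * (f x * (1 - x) ^ A) ^ n) \<longlongrightarrow> 0) (at_left 1)" for n
  proof -
    define C where "C = (real (A + 1) * 5 ^ A) ^ n"
    have ub: "\<forall>\<^sub>F x in at_left 1. (1 - x) * (f x * (1 - x) ^ A) ^ n \<le> C * ((1 - x) * (1 + ln (1 / (1 - x))) ^ (A * n))"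
      using ev01
    proof eventually_elim
      case (elim x)
      have x: "0 < x" "x < 1" using elim by auto
      define L where "L = 1 + ln (1 / (1 - x))"
      have L1: "1 \<le> L" using x by (simp add: L_def)
      have f0: "0 \<le> f x" unfolding f_def using summ[OF x] c0 x by (intro suminf_nonneg) auto
      have "f x * (1 - x) ^ A \<le> U (1 - x) * (1 - x) ^ A" using f_le[OF x] x by (intro mult_right_mono) auto
      also have "\<dots> \<le> real (A + 1) * (5 * L) ^ A" unfolding U_def L_def
        by (rule U_bound) (use x in \<open>auto simp: L_def[symmetric] intro: order_trans[OF _ mult_left_mono[OF L1]]\<close>)
      finally have "f x * (1 - x) ^ A \<le> real (A + 1) * (5 * L) ^ A" .
      hence "(f x * (1 - x) ^ A) ^ n \<le> (real (A + 1) * (5 * L) ^ A) ^ n"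
        using f0 x by (intro power_mono) auto
      also have "\<dots> = C * L ^ (A * n)" by (simp add: C_def power_mult_distrib power_mult)
      finally have "(1 - x) * (f x * (1 - x) ^ A) ^ n \<le> (1 - x) * (C * L ^ (A * n))"
        using x by (intro mult_left_mono) auto
      thus ?case by (simp add: L_def mult_ac)
    qed
    have lb: "\<forall>\<^sub>F x in at_left 1. 0 \<le> (1 - x) * (f x * (1 - x) ^ A) ^ n"
      using ev01
    proof eventually_elim
      case (elim x)
      have x: "0 < x" "x < 1" using elim by auto
      have "0 \<le> f x" unfolding f_def using summ[OF x] c0 x by (intro suminf_nonneg) auto
      thus ?case using x by simp
    qed
    have "((\<lambda>x. C * ((1 - x) * (1 + ln (1 / (1 - x))) ^ (A * n))) \<longlongrightarrow> C * 0) (at_left 1)"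
      by (intro tendsto_mult tendsto_const tlog_to_0)
    thus ?thesis using tendsto_sandwich[OF lb ub tendsto_const] by simp
  qed
  show False by (rule core_nonalg[OF qD(1) eq hinf small])
qed


theorem mainTheorem20:
  fixes \<mu> :: "nat list"
  assumes "is_strict_partition \<mu>"
    and "length \<mu> \<ge> 2"
    and "\<mu> ! 0 = \<mu> ! 1 + 1"
  shows "\<not> algebraic_over_rat_z (Av_gf \<mu>)"
  using main_result[OF assms] .

end
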